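(* Let $S=\{(x_1,y_1),\dots,(x_m,y_m)\}\in(\mathcal X\times[-B,B])^m$ and let $L:\mathbb R\times\mathbb R\to\mathbb R$ be such that for every $y'$, $L(\cdot,y')$ is $c$-Lipschitz on $[-B,B]$, i.e. $|L(y_1,y')-L(y_2,y')|\le c|y_1-y_2|$ for all $y_1,y_2\in[-B,B]$. Then \[ \hat{\mathcal R}_S(L\circ\mathcal G):=\mathbb E_{\vec\sigma}\Big[\sup_{g\in\mathcal G}\frac1m\sum_{i=1}^m\sigma_i\,\mathbb E_{x'\sim N^{\mathrm{mir}}_{x_i}}\big[L(g_{x'}(x_i),y_i)\big]\Big]\;\le\; c\,\rho_S\,(\ln m+1)\,\hat{\mathcal R}^*_S(\mathcal G_{\mathrm{local}}), \] where $\vec\sigma$ is uniform on $\{-1,1\}^m$.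
   Context: $\mathcal X$ is an input space equipped with a reference measure (e.g. Lebesgue measure on $\mathbb R^d$) with respect to which densities are taken; $B>0$. For every $x\in\mathcal X$, $N^{\mathrm{mir}}_x$ is a probability distribution on $\mathcal X$ (the "mirrored neighborhood" of $x$) with density $p_{N^{\mathrm{mir}}_x}$. $\mathcal G_{\mathrm{local}}$ is a class of functions $h:\mathcal X\to[-B,B]$. $\mathcal G$ is a class of explainers $g:\mathcal X\times\mathcal X\to[-B,B]$, written $g_{x'}(\cdot):=g(x',\cdot)$, such that $g_{x'}\in\mathcal G_{\mathrm{local}}$ for every $x'\in\mathcal X$. All functions are assumed measurable so that the expectations are defined. For a finite set $T=\{x_1,\dots,x_n\}$, the empirical Rademacher complexity is $\hat{\mathcal R}_T(\mathcal G_{\mathrm{local}}):=\mathbb E_{\vec\sigma}\big[\sup_{h\in\mathcal G_{\mathrm{local}}}\frac1n\sum_{i=1}^n\sigma_ih(x_i)\big]$ with $\vec\sigma$ uniform on $\{-1,1\}^n$. The modified complexity is $\hat{\mathcal R}^*_S(\mathcal G_{\mathrm{local}}):=\max_{1\le i\le m}\max_{T\subseteq S,|T|=i}\hat{\mathcal R}_T(\mathcal G_{\mathrm{local}})\sqrt{i/m}$ (subsets taken over the inputs $x_j$ of $S$). The disjointedness factor is $\rho_S:=\int_{\mathcal X}\sqrt{\frac1m\sum_{i=1}^m\big(p_{N^{\mathrm{mir}}_{x_i}}(x')\big)^2}\,dx'$. *)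

theory Defs
  imports "HOL-Probability.Probability"
begin

definition sign_expect :: "nat set \<Rightarrow> ((nat \<Rightarrow> real) \<Rightarrow> real) \<Rightarrow> real" where
  "sign_expect I F = (\<Sum>\<sigma>\<in>I \<rightarrow>\<^sub>E {-1, 1::real}. F \<sigma>) / 2 ^ card I"

definition emp_rademacher :: "('a \<Rightarrow> real) set \<Rightarrow> (nat \<Rightarrow> 'a) \<Rightarrow> nat set \<Rightarrow> real" where
  "emp_rademacher H xs I =
     sign_expect I (\<lambda>\<sigma>. SUP h\<in>H. (1 / real (card I)) * (\<Sum>j\<in>I. \<sigma> j * h (xs j)))"

definition mod_rademacher :: "('a \<Rightarrow> real) set \<Rightarrow> (nat \<Rightarrow> 'a) \<Rightarrow> nat \<Rightarrow> real" where
  "mod_rademacher H xs m =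
     Max {emp_rademacher H xs I * sqrt (real (card I) / real m) | I.
            I \<subseteq> {..<m} \<and> 1 \<le> card I}"

definition mir_nbhd :: "'a measure \<Rightarrow> ('a \<Rightarrow> 'a \<Rightarrow> real) \<Rightarrow> 'a \<Rightarrow> 'a measure" where
  "mir_nbhd M p x = density M (\<lambda>x'. ennreal (p x x'))"

definition disj_factor :: "'a measure \<Rightarrow> ('a \<Rightarrow> 'a \<Rightarrow> real) \<Rightarrow> (nat \<Rightarrow> 'a) \<Rightarrow> nat \<Rightarrow> ennreal" where
  "disj_factor M p xs m =
     (\<integral>\<^sup>+ x'. ennreal (sqrt ((1 / real m) * (\<Sum>i<m. (p (xs i) x') ^ 2))) \<partial>M)"

definition loss_rademacher ::
  "'a measure \<Rightarrow> ('a \<Rightarrow> 'a \<Rightarrow> real) \<Rightarrow> (real \<Rightarrow> real \<Rightarrow> real) \<Rightarrow> ('a \<Rightarrow> 'a \<Rightarrow> real) set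
   \<Rightarrow> (nat \<Rightarrow> 'a) \<Rightarrow> (nat \<Rightarrow> real) \<Rightarrow> nat \<Rightarrow> real" where
  "loss_rademacher M p L G xs ys m =
     sign_expect {..<m} (\<lambda>\<sigma>. SUP g\<in>G. (1 / real m) *
        (\<Sum>i<m. \<sigma> i * (\<integral>x'. L (g x' (xs i)) (ys i) \<partial>(mir_nbhd M p (xs i)))))"

end

theory Submission
  imports Defs
begin


lemma sum_PiE_insert:
  assumes "j \<notin> I"
  shows "(\<Sum>\<sigma>\<in>insert j I \<rightarrow>\<^sub>E S. F \<sigma>) = (\<Sum>s\<in>S. \<Sum>\<sigma>\<in>I \<rightarrow>\<^sub>E S. F (\<sigma>(j:=s)))"
proof -
  have "(\<Sum>\<sigma>\<in>insert j I \<rightarrow>\<^sub>E S. F \<sigma>) = (\<Sum>\<sigma>\<in>(\<lambda>(y, g). g(j := y)) ` (S \<times> (I \<rightarrow>\<^sub>E S)). F \<sigma>)"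
    by (simp add: PiE_insert_eq)
  also have "\<dots> = (\<Sum>(y,g)\<in>S \<times> (I \<rightarrow>\<^sub>E S). F (g(j:=y)))"
    using inj_combinator[of j I "\<lambda>_. S"] assms
    by (subst sum.reindex) (auto simp: case_prod_unfold)
  also have "\<dots> = (\<Sum>s\<in>S. \<Sum>\<sigma>\<in>I \<rightarrow>\<^sub>E S. F (\<sigma>(j:=s)))"
    by (rule sum.cartesian_product[symmetric])
  finally show ?thesis .
qed

lemma sum_sign_coord:
  assumes "finite I" "i \<in> I"
  shows "(\<Sum>\<sigma>\<in>I \<rightarrow>\<^sub>E {-1, 1::real}. \<sigma> i * a) = 0"
proof -
  have "(\<Sum>\<sigma>\<in>insert i (I-{i}) \<rightarrow>\<^sub>E {-1, 1::real}. \<sigma> i * a) = (\<Sum>s\<in>{-1,1::real}. \<Sum>\<sigma>\<in>(I-{i}) \<rightarrow>\<^sub>E {-1, 1::real}. (\<sigma>(i:=s)) i * a)"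
    by (rule sum_PiE_insert) simp
  also have "\<dots> = 0" by simp
  finally show ?thesis using assms by (simp add: insert_absorb)
qed

lemma sup_step:
  fixes H :: "'h set" and R a b :: "'h \<Rightarrow> real"
  assumes ne: "H \<noteq> {}"
    and bnd: "\<And>h. h \<in> H \<Longrightarrow> \<bar>R h\<bar> \<le> K \<and> \<bar>a h\<bar> \<le> K \<and> \<bar>b h\<bar> \<le> K"
    and lip: "\<And>h h'. h \<in> H \<Longrightarrow> h' \<in> H \<Longrightarrow> \<bar>a h - a h'\<bar> \<le> \<bar>b h - b h'\<bar>"
  shows "(SUP h\<in>H. R h + a h) + (SUP h\<in>H. R h - a h) \<le> (SUP h\<in>H. R h + b h) + (SUP h\<in>H. R h - b h)"
proof -
  define S where "S = (SUP h\<in>H. R h + b h) + (SUP h\<in>H. R h - b h)"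
  have bp: "bdd_above ((\<lambda>h. R h + b h) ` H)"
    by (rule bdd_aboveI2[where M="2*K"]) (use bnd in fastforce)
  have bm: "bdd_above ((\<lambda>h. R h - b h) ` H)"
    by (rule bdd_aboveI2[where M="2*K"]) (use bnd in fastforce)
  have key: "R h + a h + (R h' - a h') \<le> S" if "h \<in> H" "h' \<in> H" for h h'
  proof (cases "b h \<ge> b h'")
    case True
    have "R h + b h \<le> (SUP h\<in>H. R h + b h)" using bp that by (intro cSUP_upper) auto
    moreover have "R h' - b h' \<le> (SUP h\<in>H. R h - b h)" using bm that by (intro cSUP_upper) auto
    moreover have "a h - a h' \<le> b h - b h'" using lip[OF that] True by linarith
    ultimately show ?thesis unfolding S_def by linarith
  next
    case False
    have "R h' + b h' \<le> (SUP h\<in>H. R h + b h)" using bp that by (intro cSUP_upper) auto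
    moreover have "R h - b h \<le> (SUP h\<in>H. R h - b h)" using bm that by (intro cSUP_upper) auto
    moreover have "a h - a h' \<le> b h' - b h" using lip[OF that] False by linarith
    ultimately show ?thesis unfolding S_def by linarith
  qed
  have "R h' - a h' \<le> S - (SUP h\<in>H. R h + a h)" if "h' \<in> H" for h'
  proof -
    have "(SUP h\<in>H. R h + a h) \<le> S - (R h' - a h')"
      using ne key[OF _ that] by (intro cSUP_least) (auto simp: algebra_simps)
    then show ?thesis by linarith
  qed
  then have "(SUP h\<in>H. R h - a h) \<le> S - (SUP h\<in>H. R h + a h)"
    using ne by (intro cSUP_least) auto
  then show ?thesis unfolding S_def by linarith
qed

lemma sum_bound_abs:
  fixes f :: "nat \<Rightarrow> real"
  assumes "\<And>i. i \<in> I \<Longrightarrow> \<bar>f i\<bar> \<le> K"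
  shows "\<bar>\<Sum>i\<in>I. f i\<bar> \<le> real (card I) * K"
proof -
  have "\<bar>\<Sum>i\<in>I. f i\<bar> \<le> (\<Sum>i\<in>I. \<bar>f i\<bar>)" by (rule sum_abs)
  also have "\<dots> \<le> (\<Sum>i\<in>I. K)" using assms by (intro sum_mono) auto
  also have "\<dots> = real (card I) * K" by simp
  finally show ?thesis .
qed

lemma contraction:
  fixes H :: "'h set" and a b :: "nat \<Rightarrow> 'h \<Rightarrow> real"
  assumes fin: "finite I" and ne: "H \<noteq> {}"
    and bnd: "\<And>i h. i \<in> I \<Longrightarrow> h \<in> H \<Longrightarrow> \<bar>a i h\<bar> \<le> K \<and> \<bar>b i h\<bar> \<le> K"
    and lip: "\<And>i h h'. i \<in> I \<Longrightarrow> h \<in> H \<Longrightarrow> h' \<in> H \<Longrightarrow> \<bar>a i h - a i h'\<bar> \<le> \<bar>b i h - b i h'\<bar>"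
  shows "\<And>R KR. (\<And>h. h \<in> H \<Longrightarrow> \<bar>R h\<bar> \<le> KR) \<Longrightarrow>
    (\<Sum>\<sigma>\<in>I \<rightarrow>\<^sub>E {-1,1}. SUP h\<in>H. R h + (\<Sum>i\<in>I. \<sigma> i * a i h))
    \<le> (\<Sum>\<sigma>\<in>I \<rightarrow>\<^sub>E {-1,1}. SUP h\<in>H. R h + (\<Sum>i\<in>I. \<sigma> i * b i h))"
  using fin bnd lip
proof (induction I rule: finite_induct)
  case empty
  then show ?case by simp
next
  case (insert j I)
  have bndI: "\<And>i h. i \<in> I \<Longrightarrow> h \<in> H \<Longrightarrow> \<bar>a i h\<bar> \<le> K \<and> \<bar>b i h\<bar> \<le> K"
    using insert.prems by auto
  have lipI: "\<And>i h h'. i \<in> I \<Longrightarrow> h \<in> H \<Longrightarrow> h' \<in> H \<Longrightarrow> \<bar>a i h - a i h'\<bar> \<le> \<bar>b i h - b i h'\<bar>"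
    using insert.prems by auto
  have eq: "(\<Sum>i\<in>insert j I. (\<sigma>(j:=s)) i * c i h) = s * c j h + (\<Sum>i\<in>I. \<sigma> i * c i h)"
    for \<sigma> :: "nat \<Rightarrow> real" and s c h
  proof -
    have "(\<Sum>i\<in>I. (\<sigma>(j:=s)) i * c i h) = (\<Sum>i\<in>I. \<sigma> i * c i h)"
      using insert.hyps by (intro sum.cong) auto
    then show ?thesis using insert.hyps by simp
  qed
  have Kj: "\<bar>a j h\<bar> \<le> K" "\<bar>b j h\<bar> \<le> K" if "h \<in> H" for h
    using insert.prems(2) that by auto
  have "(\<Sum>\<sigma>\<in>insert j I \<rightarrow>\<^sub>E {-1,1}. SUP h\<in>H. R h + (\<Sum>i\<in>insert j I. \<sigma> i * a i h))
      = (\<Sum>s\<in>{-1,1}. \<Sum>\<sigma>\<in>I \<rightarrow>\<^sub>E {-1,1}. SUP h\<in>H. (R h + s * a j h) + (\<Sum>i\<in>I. \<sigma> i * a i h))"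
    by (subst sum_PiE_insert[OF insert.hyps(2)]) (simp only: eq add.assoc)
  also have "\<dots> \<le> (\<Sum>s\<in>{-1,1}. \<Sum>\<sigma>\<in>I \<rightarrow>\<^sub>E {-1,1}. SUP h\<in>H. (R h + s * a j h) + (\<Sum>i\<in>I. \<sigma> i * b i h))"
  proof (rule sum_mono)
    fix s :: real assume s: "s \<in> {-1,1}"
    show "(\<Sum>\<sigma>\<in>I \<rightarrow>\<^sub>E {-1,1}. SUP h\<in>H. (R h + s * a j h) + (\<Sum>i\<in>I. \<sigma> i * a i h))
      \<le> (\<Sum>\<sigma>\<in>I \<rightarrow>\<^sub>E {-1,1}. SUP h\<in>H. (R h + s * a j h) + (\<Sum>i\<in>I. \<sigma> i * b i h))"
    proof (rule insert.IH[OF _ bndI lipI])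
      fix h assume h: "h \<in> H"
      have "\<bar>s * a j h\<bar> \<le> K" using s Kj[OF h] by auto
      then show "\<bar>R h + s * a j h\<bar> \<le> KR + K" using insert.prems(1)[OF h] by linarith
    qed auto
  qed
  also have "\<dots> = (\<Sum>\<sigma>\<in>I \<rightarrow>\<^sub>E {-1,1}. \<Sum>s\<in>{-1,1}. SUP h\<in>H. (R h + (\<Sum>i\<in>I. \<sigma> i * b i h)) + s * a j h)"
    by (subst sum.swap) (simp only: ac_simps)
  also have "\<dots> \<le> (\<Sum>\<sigma>\<in>I \<rightarrow>\<^sub>E {-1,1}. \<Sum>s\<in>{-1,1}. SUP h\<in>H. (R h + (\<Sum>i\<in>I. \<sigma> i * b i h)) + s * b j h)"
  proof (rule sum_mono)
    fix \<sigma> :: "nat \<Rightarrow> real" assume \<sigma>: "\<sigma> \<in> I \<rightarrow>\<^sub>E {-1,1}"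
    define R' where "R' = (\<lambda>h. R h + (\<Sum>i\<in>I. \<sigma> i * b i h))"
    have bR': "\<bar>R' h\<bar> \<le> KR + real (card I) * K" if h: "h \<in> H" for h
    proof -
      have "\<bar>\<Sum>i\<in>I. \<sigma> i * b i h\<bar> \<le> real (card I) * K"
      proof (rule sum_bound_abs)
        fix i assume i: "i \<in> I"
        have "\<bar>\<sigma> i\<bar> = 1" using PiE_mem[OF \<sigma> i] by auto
        then show "\<bar>\<sigma> i * b i h\<bar> \<le> K" using bndI[OF i h] by (simp add: abs_mult)
      qed
      then show ?thesis using insert.prems(1)[OF h] unfolding R'_def by linarith
    qed
    have KK: "0 \<le> K" using ne Kj by (meson abs_ge_zero all_not_in_conv order_trans)
    have "(SUP h\<in>H. R' h + a j h) + (SUP h\<in>H. R' h - a j h) \<le> (SUP h\<in>H. R' h + b j h) + (SUP h\<in>H. R' h - b j h)"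
    proof (rule sup_step[OF ne, where K="KR + real (card I) * K + K"])
      fix h assume h: "h \<in> H"
      have "0 \<le> KR" using insert.prems(1)[OF h] by linarith
      then show "\<bar>R' h\<bar> \<le> KR + real (card I) * K + K \<and> \<bar>a j h\<bar> \<le> KR + real (card I) * K + K \<and> \<bar>b j h\<bar> \<le> KR + real (card I) * K + K"
        using bR'[OF h] Kj[OF h] KK by (auto intro: order_trans)
    next
      fix h h' assume "h \<in> H" "h' \<in> H"
      then show "\<bar>a j h - a j h'\<bar> \<le> \<bar>b j h - b j h'\<bar>" using insert.prems(3) by auto
    qed
    then show "(\<Sum>s\<in>{-1,1::real}. SUP h\<in>H. (R h + (\<Sum>i\<in>I. \<sigma> i * b i h)) + s * a j h)
       \<le> (\<Sum>s\<in>{-1,1::real}. SUP h\<in>H. (R h + (\<Sum>i\<in>I. \<sigma> i * b i h)) + s * b j h)"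
      unfolding R'_def by (simp add: algebra_simps)
  qed
  also have "\<dots> = (\<Sum>s\<in>{-1,1}. \<Sum>\<sigma>\<in>I \<rightarrow>\<^sub>E {-1,1}. SUP h\<in>H. R h + (s * b j h + (\<Sum>i\<in>I. \<sigma> i * b i h)))"
    by (subst sum.swap) (simp only: ac_simps)
  also have "\<dots> = (\<Sum>\<sigma>\<in>insert j I \<rightarrow>\<^sub>E {-1,1}. SUP h\<in>H. R h + (\<Sum>i\<in>insert j I. \<sigma> i * b i h))"
    by (subst sum_PiE_insert[OF insert.hyps(2)]) (simp only: eq)
  finally show ?case .
qed

lemma sorted_perm:
  fixes u :: "nat \<Rightarrow> real"
  obtains \<pi> where "bij_betw \<pi> {..<m} {..<m}"
    "\<And>a b. a \<le> b \<Longrightarrow> b < m \<Longrightarrow> u (\<pi> b) \<le> u (\<pi> a)"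
proof -
  define ps where "ps = sort_key (\<lambda>i. - u i) [0..<m]"
  have "bij_betw ((!) ps) {..<m} {..<m}"
    by (rule bij_betw_nth) (auto simp: ps_def)
  moreover have "u (ps ! b) \<le> u (ps ! a)" if "a \<le> b" "b < m" for a b
  proof -
    have "sorted (map (\<lambda>i. - u i) ps)" unfolding ps_def by simp
    then have "map (\<lambda>i. - u i) ps ! a \<le> map (\<lambda>i. - u i) ps ! b"
      by (rule sorted_nth_mono) (use that in \<open>auto simp: ps_def\<close>)
    then show ?thesis using that by (simp add: ps_def)
  qed
  ultimately show ?thesis using that by blast
qed

lemma harm_bound:
  assumes "1 \<le> m"
  shows "(\<Sum>k<m. 1 / (real k + 1)) \<le> 1 + ln (real m)"
  using assms
proof (induction m rule: dec_induct)
  case base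
  then show ?case by simp
next
  case (step n)
  have n: "real n \<ge> 1" using step by simp
  have "ln (real n / (real n + 1)) \<le> real n / (real n + 1) - 1"
    using n by (intro ln_le_minus_one) auto
  also have "\<dots> = - 1 / (real n + 1)" using n by (simp add: field_simps)
  finally have "1 / (real n + 1) \<le> ln (real n + 1) - ln (real n)"
    using n by (simp add: ln_div)
  then show ?case using step.IH by (simp add: add.commute)
qed

lemma abel_sqrt:
  fixes v :: "nat \<Rightarrow> real"
  shows "(\<Sum>k<n. (v k - v (Suc k)) * sqrt (real k + 1))
     = (\<Sum>k<n. v k * (sqrt (real k + 1) - sqrt (real k))) - v n * sqrt (real n)"
  by (induction n) (simp_all add: algebra_simps)

lemma sqrt_diff_le:
  fixes k :: nat
  shows "sqrt (real k + 1) - sqrt (real k) \<le> 1 / sqrt (real k + 1)"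
proof -
  have "sqrt (real k) * sqrt (real k + 1) \<ge> sqrt (real k) * sqrt (real k)"
    by (intro mult_left_mono) auto
  then have "sqrt (real k) * sqrt (real k + 1) \<ge> real k" by simp
  then have "(sqrt (real k + 1) - sqrt (real k)) * sqrt (real k + 1) \<le> 1"
    by (simp add: algebra_simps)
  then show ?thesis by (simp add: field_simps)
qed

lemma sign_expect_mono:
  assumes "\<And>\<sigma>. \<sigma> \<in> I \<rightarrow>\<^sub>E {-1,1} \<Longrightarrow> F \<sigma> \<le> G \<sigma>"
  shows "sign_expect I F \<le> sign_expect I G"
  unfolding sign_expect_def by (intro divide_right_mono sum_mono assms) auto

lemma sign_expect_lin:
  "sign_expect I (\<lambda>\<sigma>. \<Sum>k\<in>K. c k * F k \<sigma>) = (\<Sum>k\<in>K. c k * sign_expect I (F k))"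
  unfolding sign_expect_def
  by (subst sum.swap) (simp add: sum_divide_distrib sum_distrib_left)

lemma sign_expect_restrict:
  assumes "finite D" "finite I" "D \<inter> I = {}"
    and dep: "\<And>\<sigma> \<sigma>'. (\<And>i. i \<in> I \<Longrightarrow> \<sigma> i = \<sigma>' i) \<Longrightarrow> F \<sigma> = F \<sigma>'"
  shows "sign_expect (I \<union> D) F = sign_expect I F"
  using assms(1,3)
proof (induction D rule: finite_induct)
  case empty
  then show ?case by simp
next
  case (insert j D)
  have j: "j \<notin> I \<union> D" using insert by auto
  have fin: "finite (I \<union> D)" using insert assms(2) by auto
  have "(\<Sum>\<sigma>\<in>insert j (I \<union> D) \<rightarrow>\<^sub>E {-1,1::real}. F \<sigma>) = (\<Sum>s\<in>{-1,1::real}. \<Sum>\<sigma>\<in>(I \<union> D) \<rightarrow>\<^sub>E {-1,1::real}. F (\<sigma>(j:=s)))"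
    by (rule sum_PiE_insert[OF j])
  also have "\<dots> = (\<Sum>s\<in>{-1,1::real}. \<Sum>\<sigma>\<in>(I \<union> D) \<rightarrow>\<^sub>E {-1,1::real}. F \<sigma>)"
    using j by (intro sum.cong refl dep[symmetric]) auto
  also have "\<dots> = 2 * (\<Sum>\<sigma>\<in>(I \<union> D) \<rightarrow>\<^sub>E {-1,1::real}. F \<sigma>)" by simp
  finally have "sign_expect (I \<union> insert j D) F = sign_expect (I \<union> D) F"
    unfolding sign_expect_def using j fin by simp
  then show ?case using insert by auto
qed

lemma bdd_lin:
  fixes H :: "('a \<Rightarrow> real) set"
  assumes "\<And>h i. h \<in> H \<Longrightarrow> i \<in> I \<Longrightarrow> \<bar>h (xs i)\<bar> \<le> B"
  shows "bdd_above ((\<lambda>h. c * (\<Sum>i\<in>I. f i * h (xs i))) ` H)"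
proof (rule bdd_aboveI2)
  fix h assume h: "h \<in> H"
  have "c * (\<Sum>i\<in>I. f i * h (xs i)) \<le> \<bar>c\<bar> * \<bar>\<Sum>i\<in>I. f i * h (xs i)\<bar>"
    by (metis abs_ge_self abs_mult)
  also have "\<dots> \<le> \<bar>c\<bar> * (\<Sum>i\<in>I. \<bar>f i\<bar> * B)"
  proof (intro mult_left_mono)
    have "\<bar>\<Sum>i\<in>I. f i * h (xs i)\<bar> \<le> (\<Sum>i\<in>I. \<bar>f i * h (xs i)\<bar>)" by (rule sum_abs)
    also have "\<dots> \<le> (\<Sum>i\<in>I. \<bar>f i\<bar> * B)"
      using assms[OF h] by (intro sum_mono) (auto simp: abs_mult intro: mult_left_mono)
    finally show "\<bar>\<Sum>i\<in>I. f i * h (xs i)\<bar> \<le> (\<Sum>i\<in>I. \<bar>f i\<bar> * B)" .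
  qed auto
  finally show "c * (\<Sum>i\<in>I. f i * h (xs i)) \<le> \<bar>c\<bar> * (\<Sum>i\<in>I. \<bar>f i\<bar> * B)" .
qed

lemma emp_rad_le_mod:
  assumes "I \<subseteq> {..<m}" "1 \<le> card I"
  shows "emp_rademacher H xs I * sqrt (real (card I) / real m) \<le> mod_rademacher H xs m"
proof -
  have "{emp_rademacher H xs I * sqrt (real (card I) / real m) | I. I \<subseteq> {..<m} \<and> 1 \<le> card I}
     = (\<lambda>I. emp_rademacher H xs I * sqrt (real (card I) / real m)) ` {I. I \<subseteq> {..<m} \<and> 1 \<le> card I}"
    by auto
  moreover have "finite {I. I \<subseteq> {..<m} \<and> 1 \<le> card I}"
    by (rule finite_subset[of _ "Pow {..<m}"]) auto
  ultimately show ?thesis unfolding mod_rademacher_def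
    using assms by (intro Max_ge) auto
qed

lemma emp_rad_nonneg:
  fixes H :: "('a \<Rightarrow> real) set"
  assumes "finite I" "H \<noteq> {}" "\<And>h i. h \<in> H \<Longrightarrow> i \<in> I \<Longrightarrow> \<bar>h (xs i)\<bar> \<le> B"
  shows "0 \<le> emp_rademacher H xs I"
proof -
  obtain h0 where h0: "h0 \<in> H" using assms by auto
  have "0 = sign_expect I (\<lambda>\<sigma>. (1 / real (card I)) * (\<Sum>j\<in>I. \<sigma> j * h0 (xs j)))"
  proof -
    have "(\<Sum>\<sigma>\<in>I \<rightarrow>\<^sub>E {-1,1::real}. (1 / real (card I)) * (\<Sum>j\<in>I. \<sigma> j * h0 (xs j)))
       = (1 / real (card I)) * (\<Sum>j\<in>I. \<Sum>\<sigma>\<in>I \<rightarrow>\<^sub>E {-1,1::real}. \<sigma> j * h0 (xs j))"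
      by (subst sum.swap) (simp add: sum_distrib_left)
    also have "\<dots> = 0" using assms(1) by (simp add: sum_sign_coord)
    finally show ?thesis unfolding sign_expect_def by simp
  qed
  also have "\<dots> \<le> emp_rademacher H xs I"
    unfolding emp_rademacher_def
    by (intro sign_expect_mono cSUP_upper[OF h0] bdd_lin[OF assms(3)]) auto
  finally show ?thesis .
qed

lemma cs_sqrt:
  fixes a b :: "nat \<Rightarrow> real"
  shows "(\<Sum>i\<in>I. a i * b i) \<le> sqrt (\<Sum>i\<in>I. (a i)\<^sup>2) * sqrt (\<Sum>i\<in>I. (b i)\<^sup>2)"
proof -
  have "(\<Sum>i\<in>I. a i * b i) \<le> sqrt ((\<Sum>i\<in>I. a i * b i)\<^sup>2)" by simp
  also have "\<dots> \<le> sqrt ((\<Sum>i\<in>I. (a i)\<^sup>2) * (\<Sum>i\<in>I. (b i)\<^sup>2))"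
    by (intro real_sqrt_le_mono Cauchy_Schwarz_ineq_sum)
  also have "\<dots> = sqrt (\<Sum>i\<in>I. (a i)\<^sup>2) * sqrt (\<Sum>i\<in>I. (b i)\<^sup>2)"
    by (simp add: real_sqrt_mult)
  finally show ?thesis .
qed

lemma stepF:
  fixes v :: "nat \<Rightarrow> real"
  assumes m: "1 \<le> m" and vnn: "\<And>k. k < m \<Longrightarrow> 0 \<le> v k" and vm: "v m = 0"
  shows "(\<Sum>k<m. (v k - v (Suc k)) * sqrt (real k + 1)) \<le> (1 + ln (real m)) * sqrt (\<Sum>k<m. (v k)\<^sup>2)"
proof -
  have "(\<Sum>k<m. (v k - v (Suc k)) * sqrt (real k + 1)) = (\<Sum>k<m. v k * (sqrt (real k + 1) - sqrt (real k)))"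
    using vm by (simp add: abel_sqrt)
  also have "\<dots> \<le> (\<Sum>k<m. v k * (1 / sqrt (real k + 1)))"
    using vnn by (intro sum_mono mult_left_mono sqrt_diff_le) auto
  also have "\<dots> \<le> sqrt (\<Sum>k<m. (v k)\<^sup>2) * sqrt (\<Sum>k<m. (1 / sqrt (real k + 1))\<^sup>2)"
    by (rule cs_sqrt)
  also have "(\<Sum>k<m. (1 / sqrt (real k + 1))\<^sup>2) = (\<Sum>k<m. 1 / (real k + 1))"
    by (intro sum.cong refl) (simp add: power_divide)
  also have "sqrt (\<Sum>k<m. 1 / (real k + 1)) \<le> 1 + ln (real m)"
  proof -
    have h: "(\<Sum>k<m. 1 / (real k + 1)) \<le> 1 + ln (real m)" by (rule harm_bound[OF m])
    have l: "1 \<le> 1 + ln (real m)" using m by simp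
    have "sqrt (\<Sum>k<m. 1 / (real k + 1)) \<le> sqrt (1 + ln (real m))"
      using h by (rule real_sqrt_le_mono)
    also have "\<dots> \<le> 1 + ln (real m)"
    proof -
      have s1: "1 \<le> sqrt (1 + ln (real m))" using l by simp
      have "sqrt (1 + ln (real m)) * 1 \<le> sqrt (1 + ln (real m)) * sqrt (1 + ln (real m))"
        using s1 by (intro mult_left_mono) auto
      also have "\<dots> = 1 + ln (real m)" using l by simp
      finally show ?thesis by simp
    qed
    finally show ?thesis .
  qed
  then have "sqrt (\<Sum>k<m. (v k)\<^sup>2) * sqrt (\<Sum>k<m. 1 / (real k + 1)) \<le> sqrt (\<Sum>k<m. (v k)\<^sup>2) * (1 + ln (real m))"
    by (intro mult_left_mono) (auto intro: sum_nonneg)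
  finally show ?thesis by (simp add: mult.commute)
qed

lemma weighted_bound:
  fixes H :: "('a \<Rightarrow> real) set" and u :: "nat \<Rightarrow> real"
  assumes m: "1 \<le> m" and ne: "H \<noteq> {}"
    and bnd: "\<And>h i. h \<in> H \<Longrightarrow> i < m \<Longrightarrow> \<bar>h (xs i)\<bar> \<le> B"
    and u: "\<And>i. i < m \<Longrightarrow> 0 \<le> u i"
  shows "sign_expect {..<m} (\<lambda>\<sigma>. SUP h\<in>H. (\<Sum>i<m. \<sigma> i * (u i * h (xs i))))
     \<le> mod_rademacher H xs m * sqrt (real m) * ((1 + ln (real m)) * sqrt (\<Sum>i<m. (u i)\<^sup>2))"
proof -
  obtain \<pi> where bij: "bij_betw \<pi> {..<m} {..<m}"
    and mono: "\<And>a b. a \<le> b \<Longrightarrow> b < m \<Longrightarrow> u (\<pi> b) \<le> u (\<pi> a)"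
    using sorted_perm by blast
  define v where "v k = (if k < m then u (\<pi> k) else 0)" for k
  define \<alpha> where "\<alpha> k = v k - v (Suc k)" for k
  define T where "T k = \<pi> ` {..k}" for k
  have inj: "inj_on \<pi> {..<m}" using bij bij_betw_def by blast
  have \<pi>in: "\<pi> k < m" if "k < m" for k using bij that bij_betwE by blast
  have Tsub: "T k \<subseteq> {..<m}" if "k < m" for k using \<pi>in that unfolding T_def by auto
  have cardT: "card (T k) = Suc k" if "k < m" for k
  proof -
    have "inj_on \<pi> {..k}" by (rule inj_on_subset[OF inj]) (use that in auto)
    then show ?thesis unfolding T_def by (simp add: card_image)
  qed
  have finT: "finite (T k)" for k unfolding T_def by simp
  have \<alpha>nn: "0 \<le> \<alpha> k" if "k < m" for k
  proof (cases "Suc k < m")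
    case True
    then show ?thesis using mono[of k "Suc k"] that unfolding \<alpha>_def v_def by auto
  next
    case False
    then show ?thesis using u[OF \<pi>in[OF that]] that unfolding \<alpha>_def v_def by auto
  qed
  have decomp: "u i = (\<Sum>k<m. \<alpha> k * (if i \<in> T k then 1 else 0))" if i: "i < m" for i
  proof -
    obtain q where q: "q < m" "i = \<pi> q" using bij i by (metis bij_betw_def imageE lessThan_iff)
    have mem: "i \<in> T k \<longleftrightarrow> q \<le> k" if "k < m" for k
    proof -
      have "i \<in> T k \<longleftrightarrow> q \<in> {..k}"
        unfolding T_def q(2) using that q(1)
        by (intro inj_on_image_mem_iff[OF inj]) auto
      then show ?thesis by simp
    qed
    have "(\<Sum>k<m. \<alpha> k * (if i \<in> T k then 1 else 0)) = (\<Sum>k<m. if q \<le> k then \<alpha> k else 0)"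
      using mem by (intro sum.cong) auto
    also have "\<dots> = (\<Sum>k\<in>{k\<in>{..<m}. q \<le> k}. \<alpha> k)"
      by (subst sum.inter_filter) auto
    also have "{k\<in>{..<m}. q \<le> k} = {q..<m}" by auto
    also have "(\<Sum>k\<in>{q..<m}. \<alpha> k) = (\<Sum>k\<in>{q..<m}. (\<lambda>k. - v k) (Suc k) - (\<lambda>k. - v k) k)"
      unfolding \<alpha>_def by simp
    also have "\<dots> = v q - v m" using q(1) by (subst sum_Suc_diff') auto
    also have "\<dots> = u i" using q unfolding v_def by simp
    finally show ?thesis by simp
  qed
  have rewr: "(\<Sum>i<m. \<sigma> i * (u i * h (xs i))) = (\<Sum>k<m. \<alpha> k * (\<Sum>i\<in>T k. \<sigma> i * h (xs i)))"
    for \<sigma> :: "nat \<Rightarrow> real" and h :: "'a \<Rightarrow> real"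
  proof -
    have "(\<Sum>i<m. \<sigma> i * (u i * h (xs i))) = (\<Sum>i<m. \<Sum>k<m. \<alpha> k * (if i \<in> T k then \<sigma> i * h (xs i) else 0))"
    proof (intro sum.cong refl)
      fix i assume "i \<in> {..<m}"
      then have "\<sigma> i * (u i * h (xs i)) = (\<Sum>k<m. \<alpha> k * (if i \<in> T k then 1 else 0)) * (\<sigma> i * h (xs i))"
        using decomp by simp
      also have "\<dots> = (\<Sum>k<m. \<alpha> k * (if i \<in> T k then \<sigma> i * h (xs i) else 0))"
        by (simp add: sum_distrib_right) (intro sum.cong refl, simp)
      finally show "\<sigma> i * (u i * h (xs i)) = (\<Sum>k<m. \<alpha> k * (if i \<in> T k then \<sigma> i * h (xs i) else 0))" .
    qed
    also have "\<dots> = (\<Sum>k<m. \<alpha> k * (\<Sum>i<m. if i \<in> T k then \<sigma> i * h (xs i) else 0))"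
      by (subst sum.swap) (simp add: sum_distrib_left)
    also have "\<dots> = (\<Sum>k<m. \<alpha> k * (\<Sum>i\<in>T k. \<sigma> i * h (xs i)))"
    proof (intro sum.cong refl)
      fix k assume k: "k \<in> {..<m}"
      have "(\<Sum>i<m. if i \<in> T k then \<sigma> i * h (xs i) else 0) = (\<Sum>i\<in>{..<m} \<inter> T k. \<sigma> i * h (xs i))"
        by (simp add: sum.inter_restrict)
      also have "{..<m} \<inter> T k = T k" using Tsub k by auto
      finally show "\<alpha> k * (\<Sum>i<m. if i \<in> T k then \<sigma> i * h (xs i) else 0) = \<alpha> k * (\<Sum>i\<in>T k. \<sigma> i * h (xs i))" by simp
    qed
    finally show ?thesis .
  qed
  define S where "S k \<sigma> = (SUP h\<in>H. (1 / real (card (T k))) * (\<Sum>j\<in>T k. \<sigma> j * h (xs j)))" for k \<sigma>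
  have bndT: "\<bar>h (xs i)\<bar> \<le> B" if "h \<in> H" "i \<in> T k" "k < m" for h i k
    using bnd Tsub that by blast
  have supb: "(SUP h\<in>H. (\<Sum>i<m. \<sigma> i * (u i * h (xs i)))) \<le> (\<Sum>k<m. (\<alpha> k * real (Suc k)) * S k \<sigma>)" for \<sigma>
  proof (rule cSUP_least[OF ne])
    fix h assume h: "h \<in> H"
    have "(\<Sum>i<m. \<sigma> i * (u i * h (xs i))) = (\<Sum>k<m. (\<alpha> k * real (Suc k)) * ((1 / real (card (T k))) * (\<Sum>j\<in>T k. \<sigma> j * h (xs j))))"
      unfolding rewr by (intro sum.cong refl) (simp add: cardT)
    also have "\<dots> \<le> (\<Sum>k<m. (\<alpha> k * real (Suc k)) * S k \<sigma>)"
    proof (intro sum_mono mult_left_mono)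
      fix k assume k: "k \<in> {..<m}"
      show "0 \<le> \<alpha> k * real (Suc k)" using \<alpha>nn k by simp
      show "(1 / real (card (T k))) * (\<Sum>j\<in>T k. \<sigma> j * h (xs j)) \<le> S k \<sigma>"
        unfolding S_def using k by (intro cSUP_upper[OF h] bdd_lin[where B=B]) (auto intro: bndT)
    qed
    finally show "(\<Sum>i<m. \<sigma> i * (u i * h (xs i))) \<le> (\<Sum>k<m. (\<alpha> k * real (Suc k)) * S k \<sigma>)" .
  qed
  have Rstar: "mod_rademacher H xs m \<ge> 0"
  proof -
    have "0 \<le> emp_rademacher H xs {0} * sqrt (real (card {0::nat}) / real m)"
      using bnd m by (intro mult_nonneg_nonneg emp_rad_nonneg[OF _ ne, where B=B]) auto
    also have "\<dots> \<le> mod_rademacher H xs m" using m by (intro emp_rad_le_mod) auto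
    finally show ?thesis .
  qed
  have Sk: "sign_expect {..<m} (S k) = emp_rademacher H xs (T k)" if k: "k < m" for k
  proof -
    have "{..<m} = T k \<union> ({..<m} - T k)" using Tsub[OF k] by auto
    then have "sign_expect {..<m} (S k) = sign_expect (T k \<union> ({..<m} - T k)) (S k)" by simp
    also have "\<dots> = sign_expect (T k) (S k)"
    proof (rule sign_expect_restrict)
      fix \<sigma> \<sigma>' :: "nat \<Rightarrow> real" assume "\<And>i. i \<in> T k \<Longrightarrow> \<sigma> i = \<sigma>' i"
      then show "S k \<sigma> = S k \<sigma>'" unfolding S_def by (intro SUP_cong refl arg_cong2[where f="(*)"] sum.cong) auto
    qed (auto simp: finT)
    finally show ?thesis unfolding S_def emp_rademacher_def by simp
  qed
  have Rk: "real (Suc k) * emp_rademacher H xs (T k) \<le> mod_rademacher H xs m * sqrt (real m) * sqrt (real k + 1)"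
    if k: "k < m" for k
  proof -
    have "emp_rademacher H xs (T k) * sqrt (real (Suc k) / real m) \<le> mod_rademacher H xs m"
      using emp_rad_le_mod[OF Tsub[OF k], of H xs] cardT[OF k] by simp
    then have "emp_rademacher H xs (T k) * sqrt (real (Suc k) / real m) * (sqrt (real m) * sqrt (real k + 1))
        \<le> mod_rademacher H xs m * (sqrt (real m) * sqrt (real k + 1))"
      by (intro mult_right_mono) auto
    moreover have X: "sqrt (real (Suc k) / real m) * (sqrt (real m) * sqrt (real k + 1)) = real (Suc k)"
    proof -
      have "sqrt (real (Suc k) / real m) * sqrt (real m) = sqrt (real (Suc k))"
        using m by (simp add: real_sqrt_divide)
      then have "sqrt (real (Suc k) / real m) * (sqrt (real m) * sqrt (real k + 1)) = sqrt (real (Suc k)) * sqrt (real (Suc k))"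
        by (simp add: mult.assoc[symmetric] add.commute)
      then show ?thesis by simp
    qed
    ultimately have "emp_rademacher H xs (T k) * (sqrt (real (Suc k) / real m) * (sqrt (real m) * sqrt (real k + 1)))
        \<le> mod_rademacher H xs m * (sqrt (real m) * sqrt (real k + 1))" by (simp only: mult.assoc)
    then have "emp_rademacher H xs (T k) * real (Suc k) \<le> mod_rademacher H xs m * (sqrt (real m) * sqrt (real k + 1))"
      by (simp only: X)
    then show ?thesis by (simp only: mult_ac)
  qed
  have "sign_expect {..<m} (\<lambda>\<sigma>. SUP h\<in>H. (\<Sum>i<m. \<sigma> i * (u i * h (xs i))))
       \<le> sign_expect {..<m} (\<lambda>\<sigma>. \<Sum>k<m. (\<alpha> k * real (Suc k)) * S k \<sigma>)"
    by (intro sign_expect_mono supb)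
  also have "\<dots> = (\<Sum>k<m. (\<alpha> k * real (Suc k)) * sign_expect {..<m} (S k))"
    by (rule sign_expect_lin)
  also have "\<dots> = (\<Sum>k<m. \<alpha> k * (real (Suc k) * emp_rademacher H xs (T k)))"
    by (intro sum.cong refl) (simp add: Sk)
  also have "\<dots> \<le> (\<Sum>k<m. \<alpha> k * (mod_rademacher H xs m * sqrt (real m) * sqrt (real k + 1)))"
    by (intro sum_mono mult_left_mono Rk \<alpha>nn) auto
  also have "\<dots> = mod_rademacher H xs m * sqrt (real m) * (\<Sum>k<m. (v k - v (Suc k)) * sqrt (real k + 1))"
    unfolding \<alpha>_def by (simp add: sum_distrib_left mult_ac)
  also have "\<dots> \<le> mod_rademacher H xs m * sqrt (real m) * ((1 + ln (real m)) * sqrt (\<Sum>k<m. (v k)\<^sup>2))"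
    using Rstar u \<pi>in by (intro mult_left_mono stepF m) (auto simp: v_def)
  also have "(\<Sum>k<m. (v k)\<^sup>2) = (\<Sum>i<m. (u i)\<^sup>2)"
  proof -
    have "(\<Sum>k<m. (v k)\<^sup>2) = (\<Sum>k<m. (u (\<pi> k))\<^sup>2)" by (intro sum.cong) (auto simp: v_def)
    also have "\<dots> = (\<Sum>i<m. (u i)\<^sup>2)" by (rule sum.reindex_bij_betw[OF bij])
    finally show ?thesis .
  qed
  finally show ?thesis .
qed

lemma L_meas:
  fixes L :: "real \<Rightarrow> real \<Rightarrow> real"
  assumes lip: "\<And>a b. a \<in> {-B..B} \<Longrightarrow> b \<in> {-B..B} \<Longrightarrow> \<bar>L a y - L b y\<bar> \<le> c * \<bar>a - b\<bar>"
    and c: "0 \<le> c" and B: "0 < B"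
    and g: "g \<in> borel_measurable M" and gB: "\<And>x. x \<in> space M \<Longrightarrow> g x \<in> {-B..B}"
  shows "(\<lambda>x. L (g x) y) \<in> borel_measurable M"
proof -
  define cl where "cl t = max (-B) (min B t)" for t :: real
  have "c-lipschitz_on {-B..B} (\<lambda>t. L t y)"
    by (rule lipschitz_onI) (use lip c in \<open>auto simp: dist_real_def\<close>)
  then have cL: "continuous_on {-B..B} (\<lambda>t. L t y)" by (rule lipschitz_on_continuous_on)
  have ccl: "continuous_on UNIV cl" unfolding cl_def by (intro continuous_intros)
  have "cl ` UNIV \<subseteq> {-B..B}" using B unfolding cl_def by auto
  then have "continuous_on UNIV (\<lambda>t. L (cl t) y)" by (rule continuous_on_compose2[OF cL ccl])
  then have "(\<lambda>t. L (cl t) y) \<in> borel_measurable borel" by (rule borel_measurable_continuous_onI)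
  then have meas: "(\<lambda>x. L (cl (g x)) y) \<in> borel_measurable M" using g by (rule measurable_compose[rotated])
  have eq: "\<And>x. x \<in> space M \<Longrightarrow> L (cl (g x)) y = L (g x) y"
  proof -
    fix x assume "x \<in> space M"
    then have "cl (g x) = g x" using gB[of x] unfolding cl_def by auto
    then show "L (cl (g x)) y = L (g x) y" by simp
  qed
  have "(\<lambda>x. L (cl (g x)) y) \<in> borel_measurable M \<longleftrightarrow> (\<lambda>x. L (g x) y) \<in> borel_measurable M"
    using eq by (rule measurable_cong)
  then show ?thesis using meas by simp
qed

lemma bdd_sigma:
  fixes a :: "nat \<Rightarrow> 'h \<Rightarrow> real"
  assumes "finite I" "\<sigma> \<in> I \<rightarrow>\<^sub>E {-1,1}" "\<And>i h. i \<in> I \<Longrightarrow> h \<in> H \<Longrightarrow> \<bar>a i h\<bar> \<le> K"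
  shows "bdd_above ((\<lambda>h. R0 + (\<Sum>i\<in>I. \<sigma> i * a i h)) ` H)"
proof (rule bdd_aboveI2)
  fix h assume h: "h \<in> H"
  have "\<bar>\<Sum>i\<in>I. \<sigma> i * a i h\<bar> \<le> real (card I) * K"
  proof (rule sum_bound_abs)
    fix i assume i: "i \<in> I"
    have "\<bar>\<sigma> i\<bar> = 1" using PiE_mem[OF assms(2) i] by auto
    then show "\<bar>\<sigma> i * a i h\<bar> \<le> K" using assms(3)[OF i h] by (simp add: abs_mult)
  qed
  then show "R0 + (\<Sum>i\<in>I. \<sigma> i * a i h) \<le> \<bar>R0\<bar> + real (card I) * K" by linarith
qed

lemma pointwise:
  fixes Glocal :: "('a \<Rightarrow> real) set" and w :: "nat \<Rightarrow> real" and hs :: "(nat \<Rightarrow> real) \<Rightarrow> 'a \<Rightarrow> real"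
    and L :: "real \<Rightarrow> real \<Rightarrow> real"
  assumes m: "1 \<le> m" and B: "B > 0" and c: "0 \<le> c"
    and Gl_bdd: "\<And>h i. h \<in> Glocal \<Longrightarrow> i < m \<Longrightarrow> h (xs i) \<in> {-B..B}"
    and hs: "\<And>\<sigma>. \<sigma> \<in> {..<m} \<rightarrow>\<^sub>E {-1,1} \<Longrightarrow> hs \<sigma> \<in> Glocal"
    and w: "\<And>i. i < m \<Longrightarrow> 0 \<le> w i"
    and L_lip: "\<And>y' a b. a \<in> {-B..B} \<Longrightarrow> b \<in> {-B..B} \<Longrightarrow> \<bar>L a y' - L b y'\<bar> \<le> c * \<bar>a - b\<bar>"
  shows "(1 / 2 ^ m) * (\<Sum>\<sigma>\<in>{..<m} \<rightarrow>\<^sub>E {-1,1}. (1 / real m) * (\<Sum>i<m. \<sigma> i * (w i * L (hs \<sigma> (xs i)) (ys i))))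
        \<le> c * (ln (real m) + 1) * mod_rademacher Glocal xs m * sqrt ((1 / real m) * (\<Sum>i<m. (w i)\<^sup>2))"
proof -
  obtain \<sigma>0 where \<sigma>0: "\<sigma>0 \<in> {..<m} \<rightarrow>\<^sub>E {-1,1::real}"
  proof
    show "(\<lambda>i\<in>{..<m}. 1::real) \<in> {..<m} \<rightarrow>\<^sub>E {-1,1::real}" by auto
  qed
  have ne: "Glocal \<noteq> {}" using hs[OF \<sigma>0] by auto
  define KL where "KL = (\<Sum>j<m. \<bar>L 0 (ys j)\<bar>) + c * B"
  have Lbnd: "\<bar>L (h (xs i)) (ys i)\<bar> \<le> KL" if h: "h \<in> Glocal" and i: "i < m" for h i
  proof -
    have "\<bar>L (h (xs i)) (ys i) - L 0 (ys i)\<bar> \<le> c * \<bar>h (xs i) - 0\<bar>"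
      using Gl_bdd[OF h i] B by (intro L_lip) auto
    also have "\<dots> \<le> c * B" using Gl_bdd[OF h i] c by (intro mult_left_mono) auto
    finally have 1: "\<bar>L (h (xs i)) (ys i)\<bar> \<le> \<bar>L 0 (ys i)\<bar> + c * B" by linarith
    have "\<bar>L 0 (ys i)\<bar> \<le> (\<Sum>j<m. \<bar>L 0 (ys j)\<bar>)"
      using i by (intro member_le_sum) auto
    then show ?thesis using 1 unfolding KL_def by linarith
  qed
  have KLnn: "0 \<le> KL" unfolding KL_def using c B by (intro add_nonneg_nonneg sum_nonneg) auto
  define W where "W = (\<Sum>j<m. w j)"
  have wW: "w i \<le> W" if "i < m" for i unfolding W_def using that w by (intro member_le_sum) auto
  define K where "K = W * (KL + c * B)"
  define a where "a i h = (1 / real m) * w i * L (h (xs i)) (ys i)" for i h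
  define u where "u i = c * w i / real m" for i
  define b where "b i h = u i * h (xs i)" for i and h :: "'a \<Rightarrow> real"
  have mpos: "0 < real m" using m by simp
  have im: "1 / real m \<le> 1" using m by simp
  have bndab: "\<bar>a i h\<bar> \<le> K \<and> \<bar>b i h\<bar> \<le> K" if i: "i \<in> {..<m}" and h: "h \<in> Glocal" for i h
  proof
    have wi: "0 \<le> w i" "w i \<le> W" using w wW i by auto
    have "\<bar>a i h\<bar> = (1 / real m) * (w i * \<bar>L (h (xs i)) (ys i)\<bar>)"
      unfolding a_def using wi by (simp add: abs_mult)
    also have "\<dots> \<le> 1 * (W * (KL + c * B))"
    proof (rule mult_mono)
      have "\<bar>L (h (xs i)) (ys i)\<bar> \<le> KL + c * B"
      proof -
        have "0 \<le> c * B" using c B by simp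
        moreover have "\<bar>L (h (xs i)) (ys i)\<bar> \<le> KL" using Lbnd[OF h] i by simp
        ultimately show ?thesis by linarith
      qed
      then show "w i * \<bar>L (h (xs i)) (ys i)\<bar> \<le> W * (KL + c * B)"
        using i wi c B KLnn by (intro mult_mono) auto
    qed (use im wi KLnn c B in auto)
    finally show "\<bar>a i h\<bar> \<le> K" unfolding K_def by simp
    have hB: "\<bar>h (xs i)\<bar> \<le> B" using Gl_bdd[OF h, of i] i by (simp add: abs_le_iff)
    have "\<bar>b i h\<bar> = (1 / real m) * (w i * (c * \<bar>h (xs i)\<bar>))"
      unfolding b_def u_def using wi c by (simp add: abs_mult)
    also have "\<dots> \<le> 1 * (W * (KL + c * B))"
    proof (rule mult_mono)
      have "c * \<bar>h (xs i)\<bar> \<le> c * B" using hB c by (rule mult_left_mono)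
      then have "c * \<bar>h (xs i)\<bar> \<le> KL + c * B" using KLnn by linarith
      then show "w i * (c * \<bar>h (xs i)\<bar>) \<le> W * (KL + c * B)"
        using wi c B KLnn by (intro mult_mono) auto
    qed (use im wi KLnn c B in auto)
    finally show "\<bar>b i h\<bar> \<le> K" unfolding K_def by simp
  qed
  have lipab: "\<bar>a i h - a i h'\<bar> \<le> \<bar>b i h - b i h'\<bar>" if i: "i \<in> {..<m}" and h: "h \<in> Glocal" and h': "h' \<in> Glocal" for i h h'
  proof -
    have wi: "0 \<le> w i" using w i by auto
    have d1: "a i h - a i h' = (w i / real m) * (L (h (xs i)) (ys i) - L (h' (xs i)) (ys i))"
      unfolding a_def by (simp add: algebra_simps)
    have d2: "b i h - b i h' = (w i / real m) * (c * (h (xs i) - h' (xs i)))"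
      unfolding b_def u_def by (simp add: algebra_simps)
    have wm: "0 \<le> w i / real m" using wi by simp
    have "\<bar>a i h - a i h'\<bar> = (w i / real m) * \<bar>L (h (xs i)) (ys i) - L (h' (xs i)) (ys i)\<bar>"
      unfolding d1 abs_mult using wm wi by simp
    also have "\<dots> \<le> (w i / real m) * (c * \<bar>h (xs i) - h' (xs i)\<bar>)"
      using Gl_bdd[OF h] Gl_bdd[OF h'] i wm by (intro mult_left_mono L_lip) auto
    also have "\<dots> = \<bar>b i h - b i h'\<bar>"
      unfolding d2 abs_mult using wm wi c by simp
    finally show ?thesis .
  qed
  have step1: "(1 / real m) * (\<Sum>i<m. \<sigma> i * (w i * L (hs \<sigma> (xs i)) (ys i)))
      \<le> (SUP h\<in>Glocal. 0 + (\<Sum>i<m. \<sigma> i * a i h))" if \<sigma>: "\<sigma> \<in> {..<m} \<rightarrow>\<^sub>E {-1,1}" for \<sigma>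
  proof -
    have "(1 / real m) * (\<Sum>i<m. \<sigma> i * (w i * L (hs \<sigma> (xs i)) (ys i))) = 0 + (\<Sum>i<m. \<sigma> i * a i (hs \<sigma>))"
      unfolding a_def by (simp add: sum_distrib_left mult_ac)
    also have "\<dots> \<le> (SUP h\<in>Glocal. 0 + (\<Sum>i<m. \<sigma> i * a i h))"
      by (intro cSUP_upper hs[OF \<sigma>] bdd_sigma[OF _ \<sigma>, where K=K]) (use bndab in auto)
    finally show ?thesis .
  qed
  have step2: "(\<Sum>\<sigma>\<in>{..<m} \<rightarrow>\<^sub>E {-1,1}. SUP h\<in>Glocal. (\<lambda>h. 0) h + (\<Sum>i\<in>{..<m}. \<sigma> i * a i h))
     \<le> (\<Sum>\<sigma>\<in>{..<m} \<rightarrow>\<^sub>E {-1,1}. SUP h\<in>Glocal. (\<lambda>h. 0) h + (\<Sum>i\<in>{..<m}. \<sigma> i * b i h))"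
    by (rule contraction[OF _ ne, where K=K and KR=0]) (use bndab lipab in auto)
  have "(1 / 2 ^ m) * (\<Sum>\<sigma>\<in>{..<m} \<rightarrow>\<^sub>E {-1,1}. (1 / real m) * (\<Sum>i<m. \<sigma> i * (w i * L (hs \<sigma> (xs i)) (ys i))))
      \<le> (1 / 2 ^ m) * (\<Sum>\<sigma>\<in>{..<m} \<rightarrow>\<^sub>E {-1,1}. SUP h\<in>Glocal. 0 + (\<Sum>i<m. \<sigma> i * a i h))"
    by (intro mult_left_mono sum_mono step1) auto
  also have "\<dots> \<le> (1 / 2 ^ m) * (\<Sum>\<sigma>\<in>{..<m} \<rightarrow>\<^sub>E {-1,1}. SUP h\<in>Glocal. 0 + (\<Sum>i<m. \<sigma> i * b i h))"
    using step2 by (intro mult_left_mono) auto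
  also have "\<dots> = sign_expect {..<m} (\<lambda>\<sigma>. SUP h\<in>Glocal. (\<Sum>i<m. \<sigma> i * (u i * h (xs i))))"
    unfolding sign_expect_def b_def by simp
  also have "\<dots> \<le> mod_rademacher Glocal xs m * sqrt (real m) * ((1 + ln (real m)) * sqrt (\<Sum>i<m. (u i)\<^sup>2))"
  proof (rule weighted_bound[OF m ne, where B=B])
    show "\<And>h i. h \<in> Glocal \<Longrightarrow> i < m \<Longrightarrow> \<bar>h (xs i)\<bar> \<le> B" using Gl_bdd by fastforce
    show "\<And>i. i < m \<Longrightarrow> 0 \<le> u i" unfolding u_def using w c by auto
  qed
  also have "\<dots> = c * (ln (real m) + 1) * mod_rademacher Glocal xs m * sqrt ((1 / real m) * (\<Sum>i<m. (w i)\<^sup>2))"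
  proof -
    have "(\<Sum>i<m. (u i)\<^sup>2) = (c / real m)\<^sup>2 * (\<Sum>i<m. (w i)\<^sup>2)"
      unfolding u_def by (simp add: sum_distrib_left power_divide power_mult_distrib)
    then have su: "sqrt (\<Sum>i<m. (u i)\<^sup>2) = (c / real m) * sqrt (\<Sum>i<m. (w i)\<^sup>2)"
      using c by (simp add: real_sqrt_mult)
    have sm: "sqrt (real m) * (c / real m) = c * sqrt (1 / real m)"
    proof -
      have sp: "sqrt (real m) > 0" using mpos by simp
      have "sqrt (real m) * (c / real m) = sqrt (real m) * (c / (sqrt (real m) * sqrt (real m)))" by simp
      also have "\<dots> = c / sqrt (real m)" using sp by (simp add: field_simps)
      finally have "sqrt (real m) * (c / real m) = c / sqrt (real m)" .
      then show ?thesis by (simp add: real_sqrt_divide)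
    qed
    have "mod_rademacher Glocal xs m * sqrt (real m) * ((1 + ln (real m)) * sqrt (\<Sum>i<m. (u i)\<^sup>2))
       = mod_rademacher Glocal xs m * (1 + ln (real m)) * ((sqrt (real m) * (c / real m)) * sqrt (\<Sum>i<m. (w i)\<^sup>2))"
      unfolding su by (simp only: mult_ac)
    also have "\<dots> = mod_rademacher Glocal xs m * (1 + ln (real m)) * (c * (sqrt (1 / real m) * sqrt (\<Sum>i<m. (w i)\<^sup>2)))"
      unfolding sm by (simp only: mult_ac)
    also have "\<dots> = c * (ln (real m) + 1) * mod_rademacher Glocal xs m * (sqrt (1 / real m) * sqrt (\<Sum>i<m. (w i)\<^sup>2))"
      by (simp only: mult_ac add.commute)
    also have "\<dots> = c * (ln (real m) + 1) * mod_rademacher Glocal xs m * sqrt ((1 / real m) * (\<Sum>i<m. (w i)\<^sup>2))"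
      by (simp only: real_sqrt_mult)
    finally show ?thesis .
  qed
  finally show ?thesis .
qed



lemma ennreal_integral_le_nn:
  fixes F :: "'a \<Rightarrow> real"
  assumes "integrable M F"
  shows "ennreal (integral\<^sup>L M F) \<le> (\<integral>\<^sup>+ x. ennreal (F x) \<partial>M)"
proof -
  have "integral\<^sup>L M F \<le> integral\<^sup>L M (\<lambda>x. max 0 (F x))"
    using assms by (intro integral_mono) auto
  then have "ennreal (integral\<^sup>L M F) \<le> ennreal (integral\<^sup>L M (\<lambda>x. max 0 (F x)))"
    by (rule ennreal_leI)
  also have "\<dots> = (\<integral>\<^sup>+ x. ennreal (max 0 (F x)) \<partial>M)"
    using assms by (intro nn_integral_eq_integral[symmetric]) auto
  also have "\<dots> = (\<integral>\<^sup>+ x. ennreal (F x) \<partial>M)"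
    by (intro nn_integral_cong) (simp add: max_def ennreal_neg)
  finally show ?thesis .
qed


theorem lemmaD1:
  fixes M :: "'a measure"
    and p :: "'a \<Rightarrow> 'a \<Rightarrow> real"
    and B c :: real
    and Glocal :: "('a \<Rightarrow> real) set"
    and G :: "('a \<Rightarrow> 'a \<Rightarrow> real) set"
    and L :: "real \<Rightarrow> real \<Rightarrow> real"
    and m :: nat
    and xs :: "nat \<Rightarrow> 'a"
    and ys :: "nat \<Rightarrow> real"
  assumes B_pos: "B > 0"
    and dens_meas: "\<And>x. x \<in> space M \<Longrightarrow> p x \<in> borel_measurable M"
    and dens_nonneg: "\<And>x x'. x \<in> space M \<Longrightarrow> x' \<in> space M \<Longrightarrow> 0 \<le> p x x'"
    and dens_prob: "\<And>x. x \<in> space M \<Longrightarrow> prob_space (mir_nbhd M p x)"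
    and Glocal_bdd: "\<And>h x. h \<in> Glocal \<Longrightarrow> x \<in> space M \<Longrightarrow> h x \<in> {-B..B}"
    and G_local: "\<And>g x'. g \<in> G \<Longrightarrow> x' \<in> space M \<Longrightarrow> g x' \<in> Glocal"
    and G_meas: "\<And>g x. g \<in> G \<Longrightarrow> x \<in> space M \<Longrightarrow> (\<lambda>x'. g x' x) \<in> borel_measurable M"
    and G_ne: "G \<noteq> {}"
    and m_pos: "m \<ge> 1"
    and xs_in: "\<And>i. i < m \<Longrightarrow> xs i \<in> space M"
    and ys_in: "\<And>i. i < m \<Longrightarrow> ys i \<in> {-B..B}"
    and L_lip: "\<And>y' a b. a \<in> {-B..B} \<Longrightarrow> b \<in> {-B..B} \<Longrightarrow> \<bar>L a y' - L b y'\<bar> \<le> c * \<bar>a - b\<bar>"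
  shows "ennreal (loss_rademacher M p L G xs ys m)
           \<le> ennreal (c * (ln (real m) + 1) * mod_rademacher Glocal xs m) * disj_factor M p xs m"
proof -
  have c: "0 \<le> c"
  proof -
    have "\<bar>L B 0 - L (-B) 0\<bar> \<le> c * \<bar>B - (-B)\<bar>" using B_pos by (intro L_lip) auto
    moreover have "\<bar>B - (-B)\<bar> = 2 * B" using B_pos by simp
    ultimately have "0 \<le> c * (2 * B)" by (metis abs_ge_zero order_trans)
    then show ?thesis using B_pos by (simp add: zero_le_mult_iff)
  qed
  define N where "N i = mir_nbhd M p (xs i)" for i
  define KL where "KL = (\<Sum>j<m. \<bar>L 0 (ys j)\<bar>) + c * B"
  have Lbnd: "\<bar>L t (ys i)\<bar> \<le> KL" if t: "t \<in> {-B..B}" and i: "i < m" for t i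
  proof -
    have "\<bar>L t (ys i) - L 0 (ys i)\<bar> \<le> c * \<bar>t - 0\<bar>"
      using t B_pos by (intro L_lip) auto
    also have "\<dots> \<le> c * B" using t c by (intro mult_left_mono) auto
    finally have 1: "\<bar>L t (ys i)\<bar> \<le> \<bar>L 0 (ys i)\<bar> + c * B" by linarith
    have "\<bar>L 0 (ys i)\<bar> \<le> (\<Sum>j<m. \<bar>L 0 (ys j)\<bar>)"
      using i by (intro member_le_sum) auto
    then show ?thesis using 1 unfolding KL_def by linarith
  qed
  have gB: "g x' (xs i) \<in> {-B..B}" if "g \<in> G" "x' \<in> space M" "i < m" for g x' i
    using Glocal_bdd[OF G_local[OF that(1,2)] xs_in[OF that(3)]] .
  have fmeas: "(\<lambda>x'. L (g x' (xs i)) (ys i)) \<in> borel_measurable M" if "g \<in> G" "i < m" for g i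
    by (rule L_meas[where B=B and c=c]) (use L_lip c B_pos G_meas[OF that(1) xs_in[OF that(2)]] gB that in auto)
  have pmeas: "p (xs i) \<in> borel_measurable M" if "i < m" for i using dens_meas xs_in that by blast
  have pnn: "AE x in M. 0 \<le> p (xs i) x" if "i < m" for i
    using dens_nonneg xs_in that by (intro AE_I2) auto
  have int_eq: "(\<integral>x'. L (g x' (xs i)) (ys i) \<partial>N i) = (\<integral>x'. p (xs i) x' * L (g x' (xs i)) (ys i) \<partial>M)"
    if "g \<in> G" "i < m" for g i
    unfolding N_def mir_nbhd_def using integral_density[OF fmeas[OF that] pmeas[OF that(2)] pnn[OF that(2)]]
    by simp
  have integN: "integrable (N i) (\<lambda>x'. L (g x' (xs i)) (ys i))" if "g \<in> G" "i < m" for g i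
  proof -
    interpret prob_space "N i" unfolding N_def using dens_prob xs_in that by blast
    show ?thesis
    proof (rule integrable_const_bound[where B=KL])
      show "AE x in N i. norm (L (g x (xs i)) (ys i)) \<le> KL"
        using Lbnd gB that by (intro AE_I2) (auto simp: N_def mir_nbhd_def)
      show "(\<lambda>x'. L (g x' (xs i)) (ys i)) \<in> borel_measurable (N i)"
        using fmeas[OF that] by (simp add: N_def mir_nbhd_def)
    qed
  qed
  have integ: "integrable M (\<lambda>x'. p (xs i) x' * L (g x' (xs i)) (ys i))" if "g \<in> G" "i < m" for g i
    using integN[OF that] integrable_density[OF fmeas[OF that] pmeas[OF that(2)] pnn[OF that(2)]]
    by (simp add: N_def mir_nbhd_def)
  have absint: "\<bar>\<integral>x'. L (g x' (xs i)) (ys i) \<partial>N i\<bar> \<le> KL" if "g \<in> G" "i < m" for g i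
  proof -
    interpret prob_space "N i" unfolding N_def using dens_prob xs_in that by blast
    have ae: "AE x in N i. \<bar>L (g x (xs i)) (ys i)\<bar> \<le> KL"
      using Lbnd gB that by (intro AE_I2) (auto simp: N_def mir_nbhd_def)
    have "(\<integral>x'. L (g x' (xs i)) (ys i) \<partial>N i) \<le> KL"
      using ae by (intro integral_le_const integN[OF that]) auto
    moreover have "- KL \<le> (\<integral>x'. L (g x' (xs i)) (ys i) \<partial>N i)"
      using ae by (intro integral_ge_const integN[OF that]) auto
    ultimately show ?thesis by linarith
  qed
  define A where "A \<sigma> g = (1 / real m) * (\<Sum>i<m. \<sigma> i * (\<integral>x'. L (g x' (xs i)) (ys i) \<partial>N i))" for \<sigma> :: "nat \<Rightarrow> real" and g
  define P where "P = ({..<m} \<rightarrow>\<^sub>E {-1,1::real})"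
  define C where "C = c * (ln (real m) + 1) * mod_rademacher Glocal xs m"
  define RHS where "RHS = ennreal C * disj_factor M p xs m"
  have loss_eq: "loss_rademacher M p L G xs ys m = (\<Sum>\<sigma>\<in>P. SUP g\<in>G. A \<sigma> g) / 2 ^ m"
    unfolding loss_rademacher_def sign_expect_def A_def N_def P_def by simp
  have cardP: "card P = 2 ^ m"
    unfolding P_def by (subst card_funcsetE) (simp_all add: numeral_2_eq_2)
  have finP: "finite P" unfolding P_def by (simp add: finite_PiE)
  have Abdd: "bdd_above ((A \<sigma>) ` G)" if \<sigma>: "\<sigma> \<in> P" for \<sigma>
  proof (rule bdd_aboveI2)
    fix g assume g: "g \<in> G"
    have "\<bar>\<Sum>i<m. \<sigma> i * (\<integral>x'. L (g x' (xs i)) (ys i) \<partial>N i)\<bar> \<le> real (card {..<m}) * KL"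
    proof (rule sum_bound_abs)
      fix i assume i: "i \<in> {..<m}"
      have "\<bar>\<sigma> i\<bar> = 1" using PiE_mem[OF \<sigma>[unfolded P_def] i] by auto
      then show "\<bar>\<sigma> i * (\<integral>x'. L (g x' (xs i)) (ys i) \<partial>N i)\<bar> \<le> KL"
        using absint[OF g] i by (simp add: abs_mult)
    qed
    then have "(\<Sum>i<m. \<sigma> i * (\<integral>x'. L (g x' (xs i)) (ys i) \<partial>N i)) \<le> real m * KL" by simp
    then show "A \<sigma> g \<le> KL" unfolding A_def using m_pos by (simp add: field_simps)
  qed
  have key: "(1 / 2 ^ m) * (\<Sum>\<sigma>\<in>P. A \<sigma> (gs \<sigma>)) \<le> r"
    if gs: "\<And>\<sigma>. \<sigma> \<in> P \<Longrightarrow> gs \<sigma> \<in> G" and r: "RHS = ennreal r" "0 \<le> r" for gs r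
  proof -
    define F where "F x' = (1 / 2 ^ m) * (\<Sum>\<sigma>\<in>P. (1 / real m) * (\<Sum>i<m. \<sigma> i * (p (xs i) x' * L (gs \<sigma> x' (xs i)) (ys i))))" for x'
    have I1: "integrable M (\<lambda>x'. \<Sum>i<m. \<sigma> i * (p (xs i) x' * L (gs \<sigma> x' (xs i)) (ys i)))" if "\<sigma> \<in> P" for \<sigma>
      by (rule Bochner_Integration.integrable_sum) (use integ gs that in auto)
    have I2: "integrable M (\<lambda>x'. \<Sum>\<sigma>\<in>P. (1 / real m) * (\<Sum>i<m. \<sigma> i * (p (xs i) x' * L (gs \<sigma> x' (xs i)) (ys i))))"
      by (rule Bochner_Integration.integrable_sum) (use I1 in auto)
    have intF: "integrable M F" unfolding F_def using I2 by (rule integrable_mult_right)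
    have intF_eq: "integral\<^sup>L M F = (1 / 2 ^ m) * (\<Sum>\<sigma>\<in>P. A \<sigma> (gs \<sigma>))"
    proof -
      have e1: "(\<integral>x'. (1 / real m) * (\<Sum>i<m. \<sigma> i * (p (xs i) x' * L (gs \<sigma> x' (xs i)) (ys i))) \<partial>M)
          = (1 / real m) * (\<Sum>i<m. \<sigma> i * (\<integral>x'. p (xs i) x' * L (gs \<sigma> x' (xs i)) (ys i) \<partial>M))"
        if s: "\<sigma> \<in> P" for \<sigma>
      proof -
        have "(\<integral>x'. (\<Sum>i<m. \<sigma> i * (p (xs i) x' * L (gs \<sigma> x' (xs i)) (ys i))) \<partial>M)
           = (\<Sum>i<m. (\<integral>x'. \<sigma> i * (p (xs i) x' * L (gs \<sigma> x' (xs i)) (ys i)) \<partial>M))"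
          by (rule Bochner_Integration.integral_sum) (use integ gs s in auto)
        then show ?thesis by simp
      qed
      have "integral\<^sup>L M F = (1 / 2 ^ m) * (\<integral>x'. (\<Sum>\<sigma>\<in>P. (1 / real m) * (\<Sum>i<m. \<sigma> i * (p (xs i) x' * L (gs \<sigma> x' (xs i)) (ys i)))) \<partial>M)"
        unfolding F_def by (rule integral_mult_right_zero)
      also have "\<dots> = (1 / 2 ^ m) * (\<Sum>\<sigma>\<in>P. (\<integral>x'. (1 / real m) * (\<Sum>i<m. \<sigma> i * (p (xs i) x' * L (gs \<sigma> x' (xs i)) (ys i))) \<partial>M))"
        by (subst Bochner_Integration.integral_sum) (use I1 in auto)
      also have "\<dots> = (1 / 2 ^ m) * (\<Sum>\<sigma>\<in>P. (1 / real m) * (\<Sum>i<m. \<sigma> i * (\<integral>x'. p (xs i) x' * L (gs \<sigma> x' (xs i)) (ys i) \<partial>M)))"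
        using e1 by (intro arg_cong2[where f="(*)"] refl sum.cong) auto
      also have "\<dots> = (1 / 2 ^ m) * (\<Sum>\<sigma>\<in>P. A \<sigma> (gs \<sigma>))"
        unfolding A_def using int_eq gs by simp
      finally show ?thesis .
    qed
    have Fle: "F x \<le> C * sqrt ((1 / real m) * (\<Sum>i<m. (p (xs i) x)\<^sup>2))" if x: "x \<in> space M" for x
      unfolding F_def C_def P_def
    proof (rule pointwise[where B=B and L=L])
      show "\<And>h i. h \<in> Glocal \<Longrightarrow> i < m \<Longrightarrow> h (xs i) \<in> {-B..B}" using Glocal_bdd xs_in by blast
      show "\<And>\<sigma>. \<sigma> \<in> {..<m} \<rightarrow>\<^sub>E {-1,1} \<Longrightarrow> gs \<sigma> x \<in> Glocal" using G_local gs x P_def by blast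
      show "\<And>i. i < m \<Longrightarrow> 0 \<le> p (xs i) x" using dens_nonneg xs_in x by blast
    qed (use m_pos B_pos c L_lip in auto)
    have smeas: "(\<lambda>x. ennreal (sqrt ((1 / real m) * (\<Sum>i<m. (p (xs i) x)\<^sup>2)))) \<in> borel_measurable M"
    proof -
      have "(\<lambda>x. \<Sum>i<m. (p (xs i) x)\<^sup>2) \<in> borel_measurable M"
        using pmeas by (intro borel_measurable_sum borel_measurable_power) auto
      then show ?thesis by measurable
    qed
    have "ennreal (integral\<^sup>L M F) \<le> (\<integral>\<^sup>+ x. ennreal (F x) \<partial>M)"
      by (rule ennreal_integral_le_nn[OF intF])
    also have "\<dots> \<le> (\<integral>\<^sup>+ x. ennreal (C * sqrt ((1 / real m) * (\<Sum>i<m. (p (xs i) x)\<^sup>2))) \<partial>M)"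
      using Fle by (intro nn_integral_mono ennreal_leI) auto
    also have "\<dots> = (\<integral>\<^sup>+ x. ennreal C * ennreal (sqrt ((1 / real m) * (\<Sum>i<m. (p (xs i) x)\<^sup>2))) \<partial>M)"
      by (intro nn_integral_cong ennreal_mult'') (auto intro!: divide_nonneg_nonneg sum_nonneg)
    also have "\<dots> = RHS"
      unfolding RHS_def disj_factor_def by (rule nn_integral_cmult[OF smeas])
    finally have "ennreal (integral\<^sup>L M F) \<le> ennreal r" using r by simp
    then show ?thesis using r intF_eq by simp
  qed
  show ?thesis
  proof (cases "RHS = \<top>")
    case True
    then show ?thesis unfolding RHS_def C_def by simp
  next
    case False
    then obtain r where r: "RHS = ennreal r" "0 \<le> r" by (cases RHS) auto
    have "loss_rademacher M p L G xs ys m \<le> r + e" if e: "0 < e" for e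
    proof -
      have "\<forall>\<sigma>\<in>P. \<exists>g. g \<in> G \<and> (SUP g\<in>G. A \<sigma> g) - e < A \<sigma> g"
      proof
        fix \<sigma> assume \<sigma>: "\<sigma> \<in> P"
        have "(SUP g\<in>G. A \<sigma> g) - e < (SUP g\<in>G. A \<sigma> g)" using e by simp
        then show "\<exists>g. g \<in> G \<and> (SUP g\<in>G. A \<sigma> g) - e < A \<sigma> g"
          using less_cSUP_iff[OF G_ne Abdd[OF \<sigma>]] by blast
      qed
      then obtain gs where gs: "\<And>\<sigma>. \<sigma> \<in> P \<Longrightarrow> gs \<sigma> \<in> G \<and> (SUP g\<in>G. A \<sigma> g) - e < A \<sigma> (gs \<sigma>)"
        by metis
      have "(\<Sum>\<sigma>\<in>P. SUP g\<in>G. A \<sigma> g) \<le> (\<Sum>\<sigma>\<in>P. A \<sigma> (gs \<sigma>) + e)"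
      proof (rule sum_mono)
        fix \<sigma> assume "\<sigma> \<in> P"
        then have "(SUP g\<in>G. A \<sigma> g) - e < A \<sigma> (gs \<sigma>)" using gs by blast
        then show "(SUP g\<in>G. A \<sigma> g) \<le> A \<sigma> (gs \<sigma>) + e" by linarith
      qed
      also have "\<dots> = (\<Sum>\<sigma>\<in>P. A \<sigma> (gs \<sigma>)) + 2 ^ m * e"
        by (simp add: sum.distrib cardP)
      finally have "(\<Sum>\<sigma>\<in>P. SUP g\<in>G. A \<sigma> g) / 2 ^ m \<le> ((\<Sum>\<sigma>\<in>P. A \<sigma> (gs \<sigma>)) + 2 ^ m * e) / 2 ^ m"
        by (intro divide_right_mono) auto
      also have "\<dots> = (1 / 2 ^ m) * (\<Sum>\<sigma>\<in>P. A \<sigma> (gs \<sigma>)) + e"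
        by (simp add: field_simps)
      also have "\<dots> \<le> r + e" using key[OF _ r] gs by simp
      finally show ?thesis unfolding loss_eq .
    qed
    then have "loss_rademacher M p L G xs ys m \<le> r" by (rule field_le_epsilon)
    then have "ennreal (loss_rademacher M p L G xs ys m) \<le> ennreal r" by (rule ennreal_leI)
    then show ?thesis using r unfolding RHS_def C_def by simp
  qed
qed

end
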